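(* Let $n,k$ be integers with $1\le k\le n-2$ and let $c_0,\dots,c_{n-1}$ be real constants. For an ordered bid vector $b_1\ge\dots\ge b_n\ge 0$ define $r_i=c_0+c_1b_1+\dots+c_{i-1}b_{i-1}+c_ib_{i+1}+\dots+c_{n-1}b_n$ for $i=1,\dots,n$. Suppose that for every ordered bid vector $b_1\ge\dots\ge b_n\ge 0$ we have both $r_n\ge 0$ (IR$_u$) and $\sum_{i=1}^n r_i\le k\,b_k$ (Approx-IR$_M$). Then $c_i=0$ for $i=0,1,\dots,k-1$.
   Context: Here $r_i$ is the rebate given to the $i$-th highest included bidder in a block of $n$ included transactions of which the top $k$ are confirmed; $r_i$ depends only on the other bids, listed in decreasing order. *)

theory Defs
  imports Main "HOL.Real"
begin

text \<open>Bid vectors are functions b :: nat => real, with b 1, ..., b n meaningful.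
  Coefficients c 0, ..., c (n-1).\<close>

definition ordered_bids :: "nat \<Rightarrow> (nat \<Rightarrow> real) \<Rightarrow> bool" where
  "ordered_bids n b \<longleftrightarrow> (\<forall>i. 1 \<le> i \<and> i < n \<longrightarrow> b i \<ge> b (i+1)) \<and> b n \<ge> 0"

definition rebate :: "nat \<Rightarrow> (nat \<Rightarrow> real) \<Rightarrow> (nat \<Rightarrow> real) \<Rightarrow> nat \<Rightarrow> real" where
  "rebate n c b i = c 0 + (\<Sum>j=1..<i. c j * b j) + (\<Sum>j=i..<n. c j * b (j+1))"

end

theory Submission
  imports Defs
begin

lemma reb_step:
  fixes c :: "nat \<Rightarrow> real"
  assumes z: "\<And>l. l < m \<Longrightarrow> c l = 0" and m: "1 \<le> m"
  shows "rebate n c (\<lambda>j. if 1 \<le> j \<and> j \<le> m then 1 else 0) i = (if i \<le> m then 0 else c m)"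
proof -
  let ?b = "(\<lambda>j. if 1 \<le> j \<and> j \<le> m then (1::real) else 0)"
  have c0: "c 0 = 0" using z m by auto
  have s2: "(\<Sum>j=i..<n. c j * ?b (j+1)) = 0"
    by (rule sum.neutral) (auto simp: z)
  have e: "\<And>j. j \<in> {1..<i} \<Longrightarrow> c j * ?b j = (if j = m then c m else 0)"
  proof -
    fix j assume "j \<in> {1..<i}"
    show "c j * ?b j = (if j = m then c m else 0)"
      using z[of j] m by (cases "j < m"; cases "j = m") auto
  qed
  have s1: "(\<Sum>j=1..<i. c j * ?b j) = (\<Sum>j=1..<i. (if j = m then c m else 0))"
    by (rule sum.cong[OF refl]) (rule e)
  also have "\<dots> = (if i \<le> m then 0 else c m)"
    using m by (auto simp: sum.delta)
  finally show ?thesis unfolding rebate_def using s2 c0 by simp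
qed

lemma sum_step:
  fixes x :: real
  shows "(\<Sum>i=1..n. (if i \<le> m then 0 else x)) = real (n - m) * x"
proof -
  have "(\<Sum>i=1..n. (if i \<le> m then 0 else x)) = (\<Sum>i\<in>{1..n} \<inter> {i. \<not> i \<le> m}. x)"
    by (simp add: sum.If_cases Compl_eq)
  also have "{1..n} \<inter> {i. \<not> i \<le> m} = {max 1 (m+1)..n}" by auto
  also have "(\<Sum>i\<in>{max 1 (m+1)..n}. x) = real (n - m) * x" by simp
  finally show ?thesis by simp
qed

theorem claim2:
  fixes n k :: nat and c :: "nat \<Rightarrow> real"
  assumes "1 \<le> k" and "k + 2 \<le> n"
    and IR_u: "\<And>b. ordered_bids n b \<Longrightarrow> rebate n c b n \<ge> 0"
    and Approx_IR_M: "\<And>b. ordered_bids n b \<Longrightarrow> (\<Sum>i=1..n. rebate n c b i) \<le> real k * b k"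
  shows "\<forall>i<k. c i = 0"
proof -
  have "\<forall>l<m. c l = 0" if "m \<le> k" for m
    using that
  proof (induction m)
    case 0 then show ?case by simp
  next
    case (Suc m)
    then have IH: "\<And>l. l < m \<Longrightarrow> c l = 0" and mk: "m < k" by auto
    have "c m = 0"
    proof (cases "m = 0")
      case True
      let ?b = "(\<lambda>j. 0) :: nat \<Rightarrow> real"
      have ob: "ordered_bids n ?b" by (simp add: ordered_bids_def)
      have r: "\<And>i. rebate n c ?b i = c 0" by (simp add: rebate_def)
      have "c 0 \<ge> 0" using IR_u[OF ob] r by simp
      moreover have "real n * c 0 \<le> 0" using Approx_IR_M[OF ob] r by simp
      moreover have "n > 0" using assms by simp
      ultimately have "c 0 = 0" by (smt (verit) mult_pos_pos of_nat_0_less_iff)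
      then show ?thesis using True by simp
    next
      case False
      let ?b = "(\<lambda>j. if 1 \<le> j \<and> j \<le> m then 1 else 0) :: nat \<Rightarrow> real"
      have ob: "ordered_bids n ?b" by (simp add: ordered_bids_def)
      have r: "\<And>i. rebate n c ?b i = (if i \<le> m then 0 else c m)"
        using reb_step[of m c n] IH False by auto
      have "c m \<ge> 0" using IR_u[OF ob] r mk assms by (simp split: if_splits)
      moreover have "real (n - m) * c m \<le> 0" using Approx_IR_M[OF ob] r mk sum_step[where m=m and n=n and x="c m"]
        by simp
      moreover have "n - m > 0" using assms mk by simp
      ultimately show "c m = 0" by (smt (verit) mult_pos_pos of_nat_0_less_iff)
    qed
    then show ?case using IH less_Suc_eq by auto
  qed
  then show ?thesis by blast
qed

end
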